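(* Fix $j\in\{0,\dots,4\}$ and let $r\in\Lambda_j$ be primitive in $\Lambda_j$ with $r^2>0$. Then $r$ is a root of $\Lambda_j$ if and only if either $r^2\in\{1,2\}$, or $r^2\in\{3,6\}$ and $r\in 3\Lambda_j'$, where $\Lambda_j'$ is the dual lattice of $\Lambda_j$.
   Context: Let $\omega=e^{2\pi i/3}$, $\mathcal{E}=\mathbb{Z}[\omega]$, $\theta=\sqrt{-3}$. Let $\Lambda=\mathcal{E}^5$ with Hermitian form $h(x,y)=-x_0\bar y_0+x_1\bar y_1+\dots+x_4\bar y_4$, and write $x\cdot y$ for $h(x,y)$ and $x^2=h(x,x)$. For $j=0,\dots,4$, $\Lambda_j=\mathbb{Z}^{5-j}\oplus\theta\mathbb{Z}^j\subset\mathcal{E}^5$ is the $\mathbb{Z}$-lattice of vectors fixed by the antilinear map $(x_0,\dots,x_4)\mapsto(\bar x_0,\dots,\bar x_{4-j},-\bar x_{5-j},\dots,-\bar x_4)$, with the (real, integral) restriction of $h$. A root of $\Lambda_j$ is a primitive vector $r\in\Lambda_j$ with $r^2>0$ such that the reflection $x\mapsto x-2\frac{x\cdot r}{r^2}r$ preserves $\Lambda_j$. *)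

theory Defs
  imports Complex_Main
begin

text \<open>Vectors of \<open>\<complex>^5\<close> are modelled as functions \<open>nat \<Rightarrow> complex\<close>
  supported on the indices \<open>0..4\<close>.\<close>

definition theta :: complex where
  "theta = \<i> * complex_of_real (sqrt 3)"

definition herm :: "(nat \<Rightarrow> complex) \<Rightarrow> (nat \<Rightarrow> complex) \<Rightarrow> complex" where
  "herm x y = - (x 0 * cnj (y 0)) + (\<Sum>i\<in>{1..4}. x i * cnj (y i))"

definition Lam :: "nat \<Rightarrow> (nat \<Rightarrow> complex) set" where
  "Lam j = {x. (\<forall>i<5 - j. \<exists>n::int. x i = of_int n)
              \<and> (\<forall>i. 5 - j \<le> i \<and> i < 5 \<longrightarrow> (\<exists>n::int. x i = theta * of_int n))
              \<and> (\<forall>i\<ge>5. x i = 0)}"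

text \<open>The real vector space \<open>\<Lambda>_j \<otimes> \<real> = \<real>^(5-j) \<oplus> \<theta>\<real>^j\<close> spanned by \<open>\<Lambda>_j\<close>.\<close>
definition Vspace :: "nat \<Rightarrow> (nat \<Rightarrow> complex) set" where
  "Vspace j = {x. (\<forall>i<5 - j. \<exists>t::real. x i = of_real t)
              \<and> (\<forall>i. 5 - j \<le> i \<and> i < 5 \<longrightarrow> (\<exists>t::real. x i = theta * of_real t))
              \<and> (\<forall>i\<ge>5. x i = 0)}"

definition dual_Lam :: "nat \<Rightarrow> (nat \<Rightarrow> complex) set" where
  "dual_Lam j = {y \<in> Vspace j. \<forall>x\<in>Lam j. \<exists>n::int. herm y x = of_int n}"

definition scal :: "complex \<Rightarrow> (nat \<Rightarrow> complex) \<Rightarrow> (nat \<Rightarrow> complex)" where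
  "scal c x = (\<lambda>i. c * x i)"

definition primitive :: "nat \<Rightarrow> (nat \<Rightarrow> complex) \<Rightarrow> bool" where
  "primitive j r \<longleftrightarrow> r \<in> Lam j \<and> r \<noteq> (\<lambda>_. 0) \<and>
     (\<forall>(n::int) y. y \<in> Lam j \<and> r = scal (of_int n) y \<longrightarrow> n = 1 \<or> n = -1)"

definition reflection :: "(nat \<Rightarrow> complex) \<Rightarrow> (nat \<Rightarrow> complex) \<Rightarrow> (nat \<Rightarrow> complex)" where
  "reflection r x = (\<lambda>i. x i - (2 * herm x r / herm r r) * r i)"

definition is_root :: "nat \<Rightarrow> (nat \<Rightarrow> complex) \<Rightarrow> bool" where
  "is_root j r \<longleftrightarrow> primitive j r \<and> Re (herm r r) > 0 \<and>
     (\<forall>x\<in>Lam j. reflection r x \<in> Lam j)"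

end

theory Submission
  imports Defs
begin

lemma theta_sq: "theta * theta = -3"
proof -
  have s: "complex_of_real (sqrt 3) * complex_of_real (sqrt 3) = 3"
    by (simp only: of_real_mult[symmetric] real_sqrt_mult_self) simp
  have "theta * theta = (\<i> * \<i>) * (complex_of_real (sqrt 3) * complex_of_real (sqrt 3))"
    unfolding theta_def by (simp only: ac_simps)
  also have "\<dots> = -3" by (simp only: s) simp
  finally show ?thesis .
qed

lemma cnj_theta: "cnj theta = - theta" unfolding theta_def by simp

lemma theta_nz: "theta \<noteq> 0" unfolding theta_def by simp

definition w :: "nat \<Rightarrow> nat \<Rightarrow> int" where "w j i = (if i < 5 - j then 1 else 3)"
definition emb :: "nat \<Rightarrow> nat \<Rightarrow> int \<Rightarrow> complex" where
  "emb j i n = (if i < 5 - j then of_int n else theta * of_int n)"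
definition vec :: "nat \<Rightarrow> (nat \<Rightarrow> int) \<Rightarrow> nat \<Rightarrow> complex" where
  "vec j c = (\<lambda>i. if i < 5 then emb j i (c i) else 0)"
definition B :: "nat \<Rightarrow> (nat \<Rightarrow> int) \<Rightarrow> (nat \<Rightarrow> int) \<Rightarrow> int" where
  "B j c d = - c 0 * d 0 + w j 1 * c 1 * d 1 + w j 2 * c 2 * d 2 + w j 3 * c 3 * d 3 + w j 4 * c 4 * d 4"

lemma emb_mult: "emb j i m * cnj (emb j i n) = of_int (w j i * m * n)"
proof (cases "i < 5 - j")
  case False
  have "theta * of_int m * (- theta * of_int n) = - (theta * theta) * of_int m * of_int n"
    by (simp add: algebra_simps)
  then show ?thesis using False by (simp add: emb_def w_def cnj_theta theta_sq)
qed (simp add: emb_def w_def)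

lemma sum14: "(\<Sum>i\<in>{1..4::nat}. f i) = f 1 + f 2 + f 3 + f 4"
proof -
  have "{1..4::nat} = {1,2,3,4}" by auto
  then show ?thesis by (simp add: add.assoc)
qed

lemma herm_vec: "j \<le> 4 \<Longrightarrow> herm (vec j c) (vec j d) = of_int (B j c d)"
proof -
  assume j: "j \<le> 4"
  have w0: "w j 0 = 1" using j by (simp add: w_def)
  show ?thesis unfolding herm_def sum14 vec_def B_def
    using emb_mult[of j 0 "c 0" "d 0"] w0
    by (simp add: emb_mult)
qed

lemma herm_scal: "herm (scal k y) x = k * herm y x"
  unfolding herm_def scal_def by (simp add: sum_distrib_left algebra_simps)

lemma Lam_vec: "vec j c \<in> Lam j"
  unfolding Lam_def vec_def emb_def by force

lemma Lam_ex: assumes "x \<in> Lam j" shows "\<exists>c. x = vec j c"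
proof -
  have "\<forall>i. \<exists>n::int. (i < 5-j \<longrightarrow> x i = of_int n) \<and> (5-j \<le> i \<and> i < 5 \<longrightarrow> x i = theta * of_int n)"
  proof
    fix i
    show "\<exists>n::int. (i < 5-j \<longrightarrow> x i = of_int n) \<and> (5-j \<le> i \<and> i < 5 \<longrightarrow> x i = theta * of_int n)"
      using assms unfolding Lam_def
      by (cases "i < 5 - j"; cases "i < 5"; auto)
  qed
  then obtain c where c: "\<forall>i. (i < 5-j \<longrightarrow> x i = of_int (c i)) \<and> (5-j \<le> i \<and> i < 5 \<longrightarrow> x i = theta * of_int (c i))"
    by metis
  have "x = vec j c"
  proof
    fix i show "x i = vec j c i"
      using c assms unfolding vec_def emb_def Lam_def
      by (cases "i < 5 - j"; cases "i < 5"; auto)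
  qed
  then show ?thesis by blast
qed

lemma vec_eq: "vec j c = vec j d \<Longrightarrow> i < 5 \<Longrightarrow> c i = d i"
  using theta_nz by (drule_tac x=i in fun_cong) (auto simp: vec_def emb_def split: if_splits)

lemma vec_cong: "(\<And>i. i < 5 \<Longrightarrow> c i = d i) \<Longrightarrow> vec j c = vec j d"
  unfolding vec_def by auto

lemma scal_vec: "scal (of_int k) (vec j c) = vec j (\<lambda>i. k * c i)"
  unfolding scal_def vec_def emb_def by (auto simp: algebra_simps)

lemma diff_vec: "(\<lambda>i. vec j c i - vec j d i) = vec j (\<lambda>i. c i - d i)"
  unfolding vec_def emb_def by (auto simp: algebra_simps)


definition ev :: "nat \<Rightarrow> nat \<Rightarrow> int" where "ev i = (\<lambda>k. if k = i then 1 else 0)"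

lemma less5: "(i::nat) < 5 \<Longrightarrow> i = 0 \<or> i = 1 \<or> i = 2 \<or> i = 3 \<or> i = 4" by arith

lemma B_ev1: "i < 5 \<Longrightarrow> B j (ev i) a = (if i = 0 then -1 else w j i) * a i"
  using less5[of i] by (auto simp: B_def ev_def)

lemma B_ev2: "i < 5 \<Longrightarrow> B j a (ev i) = (if i = 0 then -1 else w j i) * a i"
  using less5[of i] by (auto simp: B_def ev_def)

lemma gcd_lemma:
  fixes n p :: int and a :: "nat \<Rightarrow> int"
  assumes n: "n > 0" and d: "\<forall>i<5. n dvd p * a i"
    and prim: "\<forall>q>0. (\<forall>i<5. q dvd a i) \<longrightarrow> q = 1"
  shows "n dvd p"
proof -
  define g where "g = gcd n p"
  have g0: "g > 0" using n by (simp add: g_def)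
  have ng: "n = (n div g) * g" and pg: "p = (p div g) * g" by (simp_all add: g_def)
  have cop: "coprime (n div g) (p div g)" using div_gcd_coprime[of n p] n by (simp add: g_def)
  have "\<forall>i<5. (n div g) dvd a i"
  proof (intro allI impI)
    fix i assume "i < (5::nat)"
    then have "(n div g) * g dvd (p div g) * g * a i" using d ng pg by metis
    then have "(n div g) dvd (p div g) * a i" using g0
      by (metis mult.commute mult.left_commute dvd_mult_cancel_left less_irrefl)
    then show "(n div g) dvd a i" using cop by (meson coprime_dvd_mult_right_iff)
  qed
  moreover have "n div g > 0"
  proof -
    have "0 < (n div g) * g" using n ng by metis
    then show ?thesis using g0 by (simp add: zero_less_mult_iff)
  qed
  ultimately have "n div g = 1" using prim by blast
  then have "n = g" using ng by simp
  then show ?thesis by (metis gcd_dvd2 g_def)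
qed

lemma prim_dvd:
  assumes "primitive j (vec j a)" shows "\<forall>q>0. (\<forall>i<5. q dvd a i) \<longrightarrow> q = 1"
proof (intro allI impI)
  fix q :: int assume q: "q > 0" and d: "\<forall>i<5. q dvd a i"
  have "scal (of_int q) (vec j (\<lambda>i. a i div q)) = vec j a"
    unfolding scal_vec by (rule vec_cong) (use d in auto)
  then have "q = 1 \<or> q = -1" using assms Lam_vec unfolding primitive_def by metis
  then show "q = 1" using q by auto
qed

lemma frac:
  assumes prim: "primitive j (vec j a)" and n: "n > 0"
    and L: "scal (of_int p / of_int n) (vec j a) \<in> Lam j"
  shows "n dvd p"
proof -
  obtain c where c: "scal (of_int p / of_int n) (vec j a) = vec j c" using Lam_ex[OF L] by blast
  have "\<forall>i<5. n dvd p * a i"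
  proof (intro allI impI)
    fix i :: nat assume i: "i < 5"
    have e: "(of_int p / of_int n) * emb j i (a i) = emb j i (c i)"
      using fun_cong[OF c, of i] i by (simp add: scal_def vec_def)
    have nz: "(of_int n :: complex) \<noteq> 0" using n by simp
    have "(of_int (p * a i) :: complex) = of_int (n * c i)"
    proof (cases "i < 5 - j")
      case True
      then have "(of_int p / of_int n) * of_int (a i) = (of_int (c i) :: complex)" using e by (simp add: emb_def)
      then show ?thesis using nz by (simp add: field_simps)
    next
      case False
      then have "(of_int p / of_int n) * (theta * of_int (a i)) = theta * (of_int (c i) :: complex)" using e by (simp add: emb_def)
      then have "theta * ((of_int p / of_int n) * of_int (a i)) = theta * (of_int (c i) :: complex)"
        by (simp add: algebra_simps)
      then have "(of_int p / of_int n) * of_int (a i) = (of_int (c i) :: complex)" using theta_nz by (metis mult_left_cancel)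
      then show ?thesis using nz by (simp add: field_simps)
    qed
    then have "p * a i = n * c i" by (simp only: of_int_eq_iff)
    then show "n dvd p * a i" by simp
  qed
  then show ?thesis using gcd_lemma[OF n _ prim_dvd[OF prim]] by blast
qed


lemma key1:
  assumes j: "j \<le> 4" and prim: "primitive j (vec j a)" and n: "n = B j a a" "n > 0"
  shows "(\<forall>x\<in>Lam j. reflection (vec j a) x \<in> Lam j) \<longleftrightarrow> (\<forall>i<5. n dvd 2 * w j i * a i)"
proof
  assume R: "\<forall>x\<in>Lam j. reflection (vec j a) x \<in> Lam j"
  show "\<forall>i<5. n dvd 2 * w j i * a i"
  proof (intro allI impI)
    fix i :: nat assume i: "i < 5"
    have "reflection (vec j a) (vec j (ev i)) \<in> Lam j" using R Lam_vec by blast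
    then obtain d where d: "reflection (vec j a) (vec j (ev i)) = vec j d" using Lam_ex by blast
    have r: "reflection (vec j a) (vec j (ev i)) = (\<lambda>k. vec j (ev i) k - (of_int (2 * B j (ev i) a) / of_int n) * vec j a k)"
      unfolding reflection_def herm_vec[OF j] n(1) by simp
    have dd: "vec j d = (\<lambda>k. vec j (ev i) k - (of_int (2 * B j (ev i) a) / of_int n) * vec j a k)"
      using r d by simp
    have "scal (of_int (2 * B j (ev i) a) / of_int n) (vec j a) = (\<lambda>k. vec j (ev i) k - vec j d k)"
      unfolding dd scal_def by simp
    also have "\<dots> = vec j (\<lambda>k. ev i k - d k)" by (rule diff_vec)
    finally have "scal (of_int (2 * B j (ev i) a) / of_int n) (vec j a) \<in> Lam j" using Lam_vec by simp
    then have "n dvd 2 * B j (ev i) a" using frac[OF prim n(2)] by blast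
    then show "n dvd 2 * w j i * a i" using B_ev1[OF i, of j a] j
      by (cases "i = 0") (auto simp: w_def)
  qed
next
  assume D: "\<forall>i<5. n dvd 2 * w j i * a i"
  show "\<forall>x\<in>Lam j. reflection (vec j a) x \<in> Lam j"
  proof
    fix x assume "x \<in> Lam j"
    then obtain c where c: "x = vec j c" using Lam_ex by blast
    have w0: "w j 0 = 1" using j by (simp add: w_def)
    have "2 * B j c a = - (c 0 * (2 * w j 0 * a 0)) + c 1 * (2 * w j 1 * a 1) + c 2 * (2 * w j 2 * a 2)
       + c 3 * (2 * w j 3 * a 3) + c 4 * (2 * w j 4 * a 4)"
      using w0 by (simp add: B_def algebra_simps)
    also have "n dvd \<dots>"
    proof -
      have "\<And>i. i < 5 \<Longrightarrow> n dvd c i * (2 * w j i * a i)" using D by (simp add: dvd_mult)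
      then show ?thesis by (intro dvd_add) (auto simp add: dvd_minus_iff)
    qed
    finally obtain k where k: "2 * B j c a = n * k" by blast
    have nz: "(of_int n :: complex) \<noteq> 0" using n by simp
    have k2: "(2::complex) * of_int (B j c a) = of_int n * of_int k"
      using arg_cong[OF k, of "of_int::int\<Rightarrow>complex"] by simp
    have q: "2 * of_int (B j c a) / of_int n = (of_int k :: complex)"
      unfolding k2 using nz by simp
    have "reflection (vec j a) x = (\<lambda>i. vec j c i - of_int k * vec j a i)"
      unfolding reflection_def c herm_vec[OF j] n(1)[symmetric] q by (rule refl)
    also have "\<dots> = (\<lambda>i. vec j c i - scal (of_int k) (vec j a) i)" by (simp add: scal_def)
    also have "\<dots> = vec j (\<lambda>i. c i - k * a i)" unfolding scal_vec diff_vec by (rule refl)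
    finally have "reflection (vec j a) x = vec j (\<lambda>i. c i - k * a i)" .
    then show "reflection (vec j a) x \<in> Lam j" using Lam_vec by simp
  qed
qed


lemma key2:
  assumes n: "n > 0" and prim: "\<forall>q>0. (\<forall>i<5. q dvd a i) \<longrightarrow> q = 1"
  shows "(\<forall>i<5. n dvd 2 * w j i * a i) \<longleftrightarrow>
     (n = 1 \<or> n = 2) \<or> ((n = 3 \<or> n = 6) \<and> (\<forall>i<5-j. 3 dvd a i))"
proof
  assume D: "\<forall>i<5. n dvd 2 * w j i * a i"
  have "\<forall>i<5. n dvd 6 * a i"
  proof (intro allI impI)
    fix i :: nat assume "i < 5"
    then have "n dvd 2 * w j i * a i" using D by blast
    moreover have "2 * w j i * a i dvd 6 * a i" by (auto simp: w_def)
    ultimately show "n dvd 6 * a i" by (rule dvd_trans)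
  qed
  then have "n dvd 6" using gcd_lemma[OF n _ prim] by blast
  then have "n \<le> 6" by (simp add: zdvd_imp_le)
  then have n6: "n = 1 \<or> n = 2 \<or> n = 3 \<or> n = 6" using n \<open>n dvd 6\<close>
    by (cases "n = 4"; cases "n = 5"; auto)
  show "(n = 1 \<or> n = 2) \<or> ((n = 3 \<or> n = 6) \<and> (\<forall>i<5-j. 3 dvd a i))"
  proof (cases "n = 3 \<or> n = 6")
    case True
    have "\<forall>i<5-j. 3 dvd a i"
    proof (intro allI impI)
      fix i assume i: "i < 5 - j"
      then have "i < 5" by simp
      then have "n dvd 2 * w j i * a i" using D by blast
      then have "n dvd 2 * a i" using i by (simp add: w_def)
      then have "3 dvd 2 * a i" using True by auto
      then show "3 dvd a i" by presburger
    qed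
    then show ?thesis using True by blast
  qed (use n6 in blast)
next
  assume H: "(n = 1 \<or> n = 2) \<or> ((n = 3 \<or> n = 6) \<and> (\<forall>i<5-j. 3 dvd a i))"
  show "\<forall>i<5. n dvd 2 * w j i * a i"
  proof (intro allI impI)
    fix i :: nat assume i: "i < 5"
    show "n dvd 2 * w j i * a i"
    proof (cases "n = 1 \<or> n = 2")
      case True then show ?thesis by auto
    next
      case False
      then have n36: "n dvd 6" and d3: "\<forall>i<5-j. 3 dvd a i" using H by auto
      have "6 dvd 2 * w j i * a i"
      proof (cases "i < 5 - j")
        case True
        then have "3 dvd a i" using d3 by blast
        then show ?thesis using True by (auto simp: w_def)
      qed (auto simp: w_def)
      then show ?thesis using n36 by (rule dvd_trans[rotated])
    qed
  qed
qed

lemma key3: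
  assumes j: "j \<le> 4"
  shows "(\<exists>y\<in>dual_Lam j. vec j a = scal 3 y) \<longleftrightarrow> (\<forall>i<5-j. 3 dvd a i)"
proof
  assume "\<exists>y\<in>dual_Lam j. vec j a = scal 3 y"
  then obtain y where y: "y \<in> dual_Lam j" and r: "vec j a = scal 3 y" by blast
  show "\<forall>i<5-j. 3 dvd a i"
  proof (intro allI impI)
    fix i assume i: "i < 5 - j"
    then have i5: "i < 5" by simp
    obtain m :: int where m: "herm y (vec j (ev i)) = of_int m"
      using y Lam_vec unfolding dual_Lam_def by blast
    have "of_int (B j a (ev i)) = herm (vec j a) (vec j (ev i))" using herm_vec[OF j] by simp
    also have "\<dots> = 3 * of_int m" using r m herm_scal by simp
    finally have "B j a (ev i) = 3 * m" by (metis of_int_eq_iff of_int_mult of_int_numeral)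
    then have "(if i = 0 then -1 else w j i) * a i = 3 * m" using B_ev2[OF i5] by simp
    then show "3 dvd a i" using i
      by (cases "i = 0") (auto simp: w_def intro: dvdI, presburger)
  qed
next
  assume d3: "\<forall>i<5-j. 3 dvd a i"
  define y where "y = scal (1/3) (vec j a)"
  have r: "vec j a = scal 3 y" unfolding y_def scal_def by auto
  have "y \<in> Vspace j"
    unfolding Vspace_def
  proof (intro CollectI conjI allI impI)
    fix i assume i: "i < 5 - j"
    then have "i < 5" by simp
    then show "\<exists>t. y i = complex_of_real t" using i
      by (intro exI[of _ "of_int (a i) / 3"]) (simp add: y_def scal_def vec_def emb_def)
  next
    fix i assume "5 - j \<le> i \<and> i < 5"
    then show "\<exists>t. y i = theta * complex_of_real t"
      by (intro exI[of _ "of_int (a i) / 3"]) (simp add: y_def scal_def vec_def emb_def)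
  next
    fix i :: nat assume "5 \<le> i"
    then show "y i = 0" by (simp add: y_def scal_def vec_def)
  qed
  moreover have "\<forall>x\<in>Lam j. \<exists>n::int. herm y x = of_int n"
  proof
    fix x assume "x \<in> Lam j"
    then obtain c where c: "x = vec j c" using Lam_ex by blast
    have w3: "\<forall>i<5. 3 dvd w j i * a i"
    proof (intro allI impI)
      fix i :: nat assume "i < 5"
      show "3 dvd w j i * a i" using d3 by (cases "i < 5 - j") (auto simp: w_def)
    qed
    have w0: "w j 0 = 1" using j by (simp add: w_def)
    have "B j a c = - ((w j 0 * a 0) * c 0) + (w j 1 * a 1) * c 1 + (w j 2 * a 2) * c 2
       + (w j 3 * a 3) * c 3 + (w j 4 * a 4) * c 4"
      using w0 by (simp add: B_def algebra_simps)
    also have "3 dvd \<dots>"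
    proof -
      have "\<And>i. i < 5 \<Longrightarrow> 3 dvd (w j i * a i) * c i" using w3 by (simp add: dvd_mult2)
      then show ?thesis by (intro dvd_add) (auto simp add: dvd_minus_iff)
    qed
    finally obtain k where k: "B j a c = 3 * k" by blast
    have "herm y x = 1/3 * of_int (B j a c)" using herm_vec[OF j] c by (simp add: y_def herm_scal)
    also have "\<dots> = of_int k" using k by simp
    finally show "\<exists>n::int. herm y x = of_int n" by blast
  qed
  ultimately have "y \<in> dual_Lam j" unfolding dual_Lam_def by blast
  then show "\<exists>y\<in>dual_Lam j. vec j a = scal 3 y" using r by blast
qed


theorem lemma5p4:
  fixes j :: nat and r :: "nat \<Rightarrow> complex"
  assumes "j \<le> 4"
    and "primitive j r"
    and "Re (herm r r) > 0"
  shows "is_root j r \<longleftrightarrow>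
           (herm r r = 1 \<or> herm r r = 2) \<or>
           ((herm r r = 3 \<or> herm r r = 6) \<and> (\<exists>y\<in>dual_Lam j. r = scal 3 y))"
proof -
  obtain a where ra: "r = vec j a" using assms(2) Lam_ex unfolding primitive_def by blast
  define n where "n = B j a a"
  have h: "herm r r = of_int n" using herm_vec[OF assms(1)] ra n_def by simp
  have n0: "n > 0" using assms(3) h by simp
  have prim: "primitive j (vec j a)" using assms(2) ra by simp
  have "is_root j r \<longleftrightarrow> (\<forall>x\<in>Lam j. reflection (vec j a) x \<in> Lam j)"
    using assms ra unfolding is_root_def by simp
  also have "\<dots> \<longleftrightarrow> (\<forall>i<5. n dvd 2 * w j i * a i)" by (rule key1[OF assms(1) prim n_def n0])
  also have "\<dots> \<longleftrightarrow> (n = 1 \<or> n = 2) \<or> ((n = 3 \<or> n = 6) \<and> (\<forall>i<5-j. 3 dvd a i))"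
    by (rule key2[OF n0 prim_dvd[OF prim]])
  also have "\<dots> \<longleftrightarrow> (herm r r = 1 \<or> herm r r = 2) \<or>
           ((herm r r = 3 \<or> herm r r = 6) \<and> (\<exists>y\<in>dual_Lam j. r = scal 3 y))"
    unfolding h by (simp add: ra key3[OF assms(1)])
  finally show ?thesis .
qed

end
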